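(* For all positive integers $n,q$, the polynomial $f_{n,q}:\mathbb{C}^3\to\mathbb{C}$, $f_{n,q}(x,y,z)=x-3x^{2n+1}y^{2q}+2x^{3n+1}y^{3q}+yz$, is M-tame but not quasitame.
   Context: For a polynomial $g:\mathbb{C}^m\to\mathbb{C}$, let $\operatorname{grad} g(x)=\left(\overline{\frac{\partial g}{\partial x_1}(x)},\dots,\overline{\frac{\partial g}{\partial x_m}(x)}\right)$ and let $\langle\cdot,\cdot\rangle$ denote the Hermitian product on $\mathbb{C}^m$. Define $M(g)=\{x\in\mathbb{C}^m : \exists\lambda\in\mathbb{C},\ \operatorname{grad} g(x)=\lambda x\}$. The polynomial $g$ is called M-tame if for every sequence $(z^k)\subseteq M(g)$ with $\|z^k\|\to\infty$ one has $|g(z^k)|\to\infty$. The polynomial $g$ is called quasitame if for every sequence $(z^k)\subseteq\mathbb{C}^m$ with $\|z^k\|\to\infty$ and $\operatorname{grad} g(z^k)\to 0$ one has $|g(z^k)-\langle z^k,\operatorname{grad} g(z^k)\rangle|\to\infty$. *)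

theory Defs
  imports "HOL-Analysis.Analysis"
begin

definition cpartial :: "(complex ^ 'm \<Rightarrow> complex) \<Rightarrow> 'm \<Rightarrow> complex ^ 'm \<Rightarrow> complex" where
  "cpartial g i x = deriv (\<lambda>t. g (\<chi> j. if j = i then t else x $ j)) (x $ i)"

definition cgrad :: "(complex ^ 'm \<Rightarrow> complex) \<Rightarrow> complex ^ 'm \<Rightarrow> complex ^ 'm" where
  "cgrad g x = (\<chi> i. cnj (cpartial g i x))"

definition hprod :: "complex ^ 'm \<Rightarrow> complex ^ 'm \<Rightarrow> complex" where
  "hprod z w = (\<Sum>i\<in>UNIV. z $ i * cnj (w $ i))"

definition Mset :: "(complex ^ 'm \<Rightarrow> complex) \<Rightarrow> (complex ^ 'm) set" where
  "Mset g = {x. \<exists>c::complex. cgrad g x = c *s x}"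

definition M_tame :: "(complex ^ 'm \<Rightarrow> complex) \<Rightarrow> bool" where
  "M_tame g \<longleftrightarrow> (\<forall>z :: nat \<Rightarrow> complex ^ 'm.
      (\<forall>k. z k \<in> Mset g) \<and> filterlim (\<lambda>k. norm (z k)) at_top sequentially
      \<longrightarrow> filterlim (\<lambda>k. norm (g (z k))) at_top sequentially)"

definition quasitame :: "(complex ^ 'm \<Rightarrow> complex) \<Rightarrow> bool" where
  "quasitame g \<longleftrightarrow> (\<forall>z :: nat \<Rightarrow> complex ^ 'm.
      filterlim (\<lambda>k. norm (z k)) at_top sequentially \<and> (\<lambda>k. cgrad g (z k)) \<longlonglongrightarrow> 0
      \<longrightarrow> filterlim (\<lambda>k. norm (g (z k) - hprod (z k) (cgrad g (z k)))) at_top sequentially)"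

definition f_nq :: "nat \<Rightarrow> nat \<Rightarrow> complex ^ 3 \<Rightarrow> complex" where
  "f_nq n q v = (let x = v $ 1; y = v $ 2; z = v $ 3 in
     x - 3 * x ^ (2*n+1) * y ^ (2*q) + 2 * x ^ (3*n+1) * y ^ (3*q) + y * z)"

end

theory Submission
  imports Defs
begin


lemma neg_fac: "(0::real) < x * y \<Longrightarrow> x < 0 \<Longrightarrow> y < 0"
  by (auto simp: zero_less_mult_iff)

lemma pos_fac: "(0::real) < x * y \<Longrightarrow> x > 0 \<Longrightarrow> y > 0"
  by (auto simp: zero_less_mult_iff)

lemma real_core_m_lt1:
  fixes n q :: nat and a C m U W S F K Pm :: real
  assumes n: "n > 0" and q: "q > 0" and K: "K \<ge> 1"
    and a: "a > 0" and C: "C > 0" and m0: "m > 0" and m1: "m < 1" and U: "U > 0" and W: "W \<ge> 0"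
    and hP: "Pm = m * a" and hPS: "Pm = U^2 * W * \<bar>S + 6*n\<bar>"
    and hE1: "6 * q * a * U^2 * W = m * \<bar>m^2 - 1\<bar> * C"
    and hE5: "6 * q * a^2 = (m^2 - 1) * C * (S + 6 * n)"
    and hF: "q * F = m * \<bar>q * a^2 - n * (m^2 - 1) * C + q * C\<bar>"
    and hU: "U^2 = (a^2)^n * (m^2 * C)^q"
    and hPsmall: "U^2 \<le> 1 / (34 * n) \<Longrightarrow> Pm \<ge> 1/2"
    and hS6: "S \<le> - 6 * n \<Longrightarrow> U^2 * W * \<bar>S\<bar> \<ge> 3/80"
    and hFK: "F \<le> K"
  shows "a^2 + m^2 * C + C \<le> (160*K*n/3)^2 + 2 * K * (320*K*n/3 + 34 * n * ((160*K*n/3)^2)^n * K^q)"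
proof -
  have nq: "real n \<ge> 1" "real q \<ge> 1" using n q by auto
  have L: "q * a^2 - n * (m^2 - 1) * C + q * C \<ge> q * (a^2 + C)"
  proof -
    have "m^2 \<le> 1" using m0 m1 by (simp add: power_le_one)
    then have "n * (m^2 - 1) * C \<le> 0" using C by (simp add: mult_nonneg_nonpos mult_nonpos_nonneg)
    then show ?thesis by (simp add: algebra_simps)
  qed
  have qpos: "real q > 0" using q by simp
  have "q * F \<ge> m * (q * (a^2 + C))"
    using hF L m0 qpos a C by (simp add: mult_left_mono)
  then have "q * F \<ge> q * (m * (a^2 + C))" by (simp add: algebra_simps)
  then have FF: "F \<ge> m * (a^2 + C)" using qpos mult_le_cancel_left_pos by blast
  have FF': "F \<ge> m * a^2 + m * C" using FF by (simp add: distrib_left)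
  have "m * a^2 \<ge> 0" "m * C \<ge> 0" using m0 C by simp_all
  then have mA: "m * a^2 \<le> K" and mC: "m * C \<le> K" using FF' hFK by linarith+
  have Sneg: "S + 6 * n < 0"
  proof -
    have "6 * q * a^2 > 0" using a qpos by simp
    then have "((m^2 - 1) * C) * (S + 6 * n) > 0" using hE5 by simp
    moreover have "m^2 < 1" using m0 m1 by (simp add: power_less_one_iff)
    then have "(m^2 - 1) * C < 0" using C by (simp add: mult_neg_pos)
    ultimately show ?thesis by (rule neg_fac)
  qed
  have "m * a^2 = a * Pm" using hP by (simp add: power2_eq_square)
  also have "\<dots> = a * U^2 * W * \<bar>S + 6*n\<bar>" using hPS by simp
  finally have t1: "a * U^2 * W * \<bar>S + 6*n\<bar> \<le> K" using mA by simp
  have "6 * q * a * U^2 * W \<le> m * C"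
  proof -
    have "m^2 < 1" using m0 m1 by (simp add: power_less_one_iff)
    moreover have "m^2 \<ge> 0" by simp
    ultimately have "\<bar>m^2 - 1\<bar> \<le> 1" by linarith
    then have "m * \<bar>m^2 - 1\<bar> * C \<le> m * 1 * C" using m0 C by (intro mult_right_mono mult_left_mono) auto
    then show ?thesis using hE1 by simp
  qed
  then have t2: "6 * q * a * U^2 * W \<le> K" using mC by simp
  have aUW: "a * U^2 * W \<ge> 0" using a W by simp
  have Sb: "\<bar>S + 6*n\<bar> + 6 * q \<ge> \<bar>S\<bar> / n"
  proof -
    have "\<bar>S + 6*n\<bar> = -S - 6*n" "\<bar>S\<bar> = - S" using Sneg nq by auto
    moreover have hh: "(-S - 6*real n + 6*real q) * real n \<ge> -S"
    proof -
      define X where "X = (-S - 6*real n) * real n"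
      define Y where "Y = real q * real n"
      have e: "(-S - 6*real n + 6*real q) * real n = X + 6*Y" unfolding X_def Y_def by (simp add: algebra_simps)
      have "(-S - 6*real n) * real n \<ge> (-S - 6*real n) * 1" using Sneg nq by (intro mult_left_mono) auto
      then have x: "X \<ge> -S - 6*real n" unfolding X_def by simp
      have "real q * real n \<ge> 1 * real n" using nq by (intro mult_right_mono) auto
      then have y: "Y \<ge> real n" unfolding Y_def by simp
      show ?thesis unfolding e using x y by linarith
    qed
    moreover have "(-S) / real n \<le> -S - 6*real n + 6*real q"
      using pos_divide_le_eq[of "real n" "-S"] nq hh by simp
    ultimately show ?thesis by simp
  qed
  have "a * U^2 * W * (\<bar>S\<bar> / n) \<le> a * U^2 * W * (\<bar>S + 6*n\<bar> + 6 * q)"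
    using Sb aUW by (intro mult_left_mono) auto
  also have "\<dots> \<le> 2 * K" using t1 t2 by (simp add: algebra_simps)
  finally have t3: "a * (U^2 * W * \<bar>S\<bar>) \<le> 2 * K * n" using nq by (simp add: field_simps)
  have "U^2 * W * \<bar>S\<bar> \<ge> 3/80" using hS6 Sneg by simp
  then have "a * (3/80) \<le> a * (U^2 * W * \<bar>S\<bar>)" using a by (intro mult_left_mono) auto
  then have "a * (3/80) \<le> 2 * K * n" using t3 by linarith
  then have abound: "a \<le> 160*K*n/3" by simp
  define a0 where "a0 = 160*K*n/3"
  have "1 * 1 \<le> K * n" using K nq by (intro mult_mono) auto
  then have a0pos: "a0 \<ge> 1" unfolding a0_def by simp
  have A0: "a^2 \<le> a0^2" using abound a unfolding a0_def by (simp add: power_mono)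
  define M1 where "M1 = 320*K*n/3 + 34 * n * (a0^2)^n * K^q"
  have Kq: "K^q \<ge> 1" using K by simp
  have a0n: "(a0^2)^n \<ge> 1" using a0pos by simp
  have M1pos: "M1 > 0" unfolding M1_def using K nq Kq a0n by (simp add: add_pos_pos)
  have mlow: "1 / m \<le> M1"
  proof (cases "U^2 \<le> 1 / (34 * n)")
    case True
    then have "m * a \<ge> 1/2" using hPsmall hP by simp
    then have "1/m \<le> 2 * a" using m0 a by (simp add: field_simps)
    also have "\<dots> \<le> 320*K*n/3" using abound by simp
    also have "\<dots> \<le> M1" unfolding M1_def using nq a0n Kq by simp
    finally show ?thesis .
  next
    case False
    have "U^2 = (a^2)^n * (m^q * (m * C)^q)"
      using hU by (simp add: power2_eq_square power_mult_distrib mult.assoc)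
    also have "\<dots> \<le> (a0^2)^n * (m^q * K^q)"
      using A0 mC m0 C a abound unfolding a0_def by (intro mult_mono power_mono) auto
    finally have "1 / (34 * n) < (a0^2)^n * K^q * m^q" using False by (simp add: algebra_simps)
    moreover have "m^q \<le> m" using m0 m1 q by (metis One_nat_def Suc_leI less_imp_le power_decreasing power_one_right)
    moreover have "(a0^2)^n * K^q * m^q \<le> (a0^2)^n * K^q * m"
      using a0n Kq \<open>m^q \<le> m\<close> by (intro mult_left_mono) auto
    ultimately have "1 / (34 * n) < (a0^2)^n * K^q * m" by linarith
    then have "1 < 34 * n * (a0^2)^n * K^q * m" using nq by (simp add: field_simps)
    then have "1/m < 34 * n * (a0^2)^n * K^q" using m0 by (simp add: field_simps)
    moreover have "K * real n \<ge> 0" using K by simp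
    ultimately show ?thesis unfolding M1_def by linarith
  qed
  have "C \<le> K * (1/m)" using mC m0 by (simp add: field_simps)
  also have "\<dots> \<le> K * M1" using mlow K by (intro mult_left_mono) auto
  finally have Cb: "C \<le> K * M1" .
  have "m^2 * C \<le> 1 * C" using m0 m1 C by (intro mult_right_mono) (auto simp: power_le_one)
  then have "a^2 + m^2 * C + C \<le> a0^2 + 2 * (K * M1)" using A0 Cb by simp
  then show ?thesis unfolding M1_def a0_def by simp
qed


lemma real_core_m_gt1:
  fixes n q :: real and a C m U W S F K Pm :: real
  assumes n: "n \<ge> 1" and q: "q \<ge> 1" and K: "K \<ge> 1"
    and a: "a > 0" and C: "C > 0" and m1: "m > 1" and U: "U > 0" and W: "W \<ge> 0"
    and hP: "Pm = m * a" and hPS: "Pm = U^2 * W * \<bar>S + 6*n\<bar>"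
    and hE1: "6 * q * a * U^2 * W = m * \<bar>m^2 - 1\<bar> * C"
    and hE5: "6 * q * a^2 = (m^2 - 1) * C * (S + 6 * n)"
    and hF: "q * F = m * \<bar>q * a^2 - n * (m^2 - 1) * C + q * C\<bar>"
    and hW: "W \<le> U + 1"
    and hS4: "U > 4 \<Longrightarrow> S \<ge> 1"
    and hP4: "U \<le> 4 \<Longrightarrow> Pm \<le> 657 * n"
    and hFK: "F \<le> K"
  shows "a^2 + m^2 * C + C \<le> ((657*n)^2 + (1+6*n)*K) * (1 + q/n) + 2*K
           + (480*n)^2 + 4 * (480^2*n*q) + 6*K + 6*n*(480^2*n*q)/q"
proof -
  have nq: "n \<ge> 1" "q \<ge> 1" using n q by auto
  define L where "L = q * a^2 - n * (m^2 - 1) * C + q * C"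
  have m2: "m^2 > 1" using m1 by (simp add: one_less_power)
  have m21: "m^2 - 1 > 0" using m2 by simp
  have Cm: "(m^2 - 1) * C > 0" using m21 C by simp
  have Spos: "S + 6 * n > 0"
  proof -
    have "6 * q * a^2 > 0" using a nq by simp
    then have "((m^2 - 1) * C) * (S + 6 * n) > 0" using hE5 by simp
    then show ?thesis using Cm by (rule pos_fac)
  qed
  have LS: "L = (m^2 - 1) * C * S / 6 + q * C"
  proof -
    define X where "X = (m^2 - 1) * C"
    have "6 * (q * a^2) = X * S + 6 * (n * X)"
      using hE5 unfolding X_def by (simp add: algebra_simps)
    then have "q * a^2 = X * S / 6 + n * X" by simp
    moreover have "L = q*a^2 - n*X + q*C" unfolding L_def X_def by (simp add: algebra_simps)
    ultimately have "L = X * S / 6 + q * C" by simp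
    then show ?thesis unfolding X_def by simp
  qed
  have qF: "q * F = m * \<bar>L\<bar>" using hF unfolding L_def by simp
  have Lle: "\<bar>L\<bar> \<le> q * K"
  proof -
    have "\<bar>L\<bar> = 1 * \<bar>L\<bar>" by simp
    also have "\<dots> \<le> m * \<bar>L\<bar>" using m1 by (intro mult_right_mono) auto
    also have "\<dots> = q * F" using qF by simp
    also have "\<dots> \<le> q * K" using hFK nq by (intro mult_left_mono) auto
    finally show ?thesis .
  qed
  have A_le: "a^2 \<le> ((657*n)^2 + (1+6*n)*K)" if S0: "S \<ge> 0"
  proof (cases "U \<le> 4")
    case True
    have "a = 1 * a" by simp
    also have "\<dots> \<le> m * a" using m1 a by (intro mult_right_mono) auto
    also have "\<dots> \<le> 657 * n" using hP hP4 True by simp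
    finally have "a^2 \<le> (657*n)^2" using a by (intro power_mono) auto
    moreover have "(1+6*n)*K \<ge> 0" using K nq by simp
    ultimately show ?thesis by linarith
  next
    case False
    then have S1: "S \<ge> 1" using hS4 by simp
    have "6 * q * a^2 = (m^2 - 1) * C * (S + 6 * n)" by (rule hE5)
    also have "\<dots> \<le> (m^2 - 1) * C * (S * (1 + 6 * n))"
    proof -
      have "S + 6*n \<le> S + 6*n*S" using S1 nq by (simp add: mult_le_cancel_left1)
      then have "S + 6*n \<le> S * (1 + 6*n)" by (simp add: algebra_simps)
      then show ?thesis using Cm by (intro mult_left_mono) auto
    qed
    also have "\<dots> = 6 * ((m^2 - 1) * C * S / 6) * (1 + 6 * n)" by (simp add: algebra_simps)
    also have "\<dots> \<le> 6 * L * (1 + 6 * n)"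
    proof -
      have "(m^2 - 1) * C * S / 6 \<le> L" using LS C nq by simp
      then show ?thesis using nq by (intro mult_right_mono) auto
    qed
    also have "\<dots> \<le> 6 * (q * K) * (1 + 6 * n)" using Lle nq by (intro mult_right_mono) auto
    finally have "q * a^2 \<le> q * ((1 + 6*n) * K)" by (simp add: algebra_simps)
    then have "a^2 \<le> (1 + 6*n) * K" using nq by simp
    moreover have "(657*n)^2 \<ge> 0" by simp
    ultimately show ?thesis by linarith
  qed
  show ?thesis
  proof (cases "S \<ge> 0")
    case True
    have "(m^2 - 1) * C * S / 6 \<ge> 0" using True Cm by simp
    then have "q * C \<le> L" using LS by simp
    then have "q * C \<le> q * K" using Lle by simp
    then have Cb: "C \<le> K" using nq by simp
    have "(m^2 - 1) * C * (6 * n) \<le> (m^2 - 1) * C * (S + 6 * n)" using True Cm by (intro mult_left_mono) auto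
    then have "(m^2 - 1) * C * n \<le> q * a^2" using hE5 by simp
    then have "(m^2 - 1) * C \<le> q * a^2 / n" using nq by (simp add: pos_le_divide_eq)
    also have "\<dots> \<le> q * ((657*n)^2 + (1+6*n)*K) / n" using A_le[OF True] nq by (intro divide_right_mono mult_left_mono) auto
    finally have mC: "m^2 * C \<le> C + q * ((657*n)^2 + (1+6*n)*K) / n" by (simp add: algebra_simps)
    define A1 where "A1 = (657*n)^2 + (1+6*n)*K"
    have eA: "A1 * (1 + q/n) = A1 + q * A1 / n" by (simp add: algebra_simps)
    have "a^2 + m^2 * C + C \<le> A1 * (1 + q/n) + 2*K"
      using A_le[OF True] Cb mC unfolding eA A1_def[symmetric] by linarith
    then have "a^2 + m^2 * C + C \<le> ((657*n)^2 + (1+6*n)*K) * (1 + q/n) + 2*K"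
      unfolding A1_def .
    moreover have "0 \<le> (480*n)^2 + 4 * (480^2*n*q) + 6*K + 6*n*(480^2*n*q)/q" using K nq by simp
    ultimately show ?thesis by linarith
  next
    case False
    define Q where "Q = (480^2*n*q :: real)"
    have U4: "U \<le> 4" using hS4 False by force
    have W5: "W \<le> 5" using hW U4 by simp
    have UW: "U^2 * W \<le> 80"
    proof -
      have "U^2 \<le> 4^2" using U U4 by (intro power_mono) auto
      then have "U^2 * W \<le> 16 * 5" using W W5 by (intro mult_mono) auto
      then show ?thesis by simp
    qed
    have S6: "\<bar>S + 6*n\<bar> \<le> 6 * n" using False Spos by simp
    have Pmb: "Pm \<le> 480 * n"
    proof -
      have "Pm \<le> 80 * (6 * n)" unfolding hPS using UW S6 W U by (intro mult_mono) auto
      then show ?thesis by simp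
    qed
    have ab: "a \<le> 480 * n"
    proof -
      have "a = 1 * a" by simp
      also have "\<dots> \<le> m * a" using m1 a by (intro mult_right_mono) auto
      finally show ?thesis using hP Pmb by simp
    qed
    then have Ab: "a^2 \<le> (480*n)^2" using a by (intro power_mono) auto
    have key: "m^2 * ((m^2 - 1) * C) \<le> Q"
    proof -
      have "m^2 * ((m^2 - 1) * C) = m * (m * \<bar>m^2 - 1\<bar> * C)" using m21 by (simp add: power2_eq_square)
      also have "\<dots> = m * (6 * q * a * U^2 * W)" using hE1 by simp
      also have "\<dots> = 6 * q * Pm * (U^2 * W)" using hP by (simp add: algebra_simps)
      also have "\<dots> \<le> 6 * q * (480 * n) * 80" using Pmb UW U W hP a m1 nq by (intro mult_mono) auto
      finally show ?thesis unfolding Q_def by (simp add: algebra_simps power2_eq_square)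
    qed
    have Qpos: "Q > 0" unfolding Q_def using nq by simp
    have CB: "m^2 * C \<le> Q + 2 * (Q + 2*K + 2*n*Q/q) \<and> C \<le> Q + 2*K + 2*n*Q/q"
    proof (cases "m^2 \<ge> 2")
      case True
      have "m^2 * C \<le> m^2 * ((m^2 - 1) * C)"
      proof -
        have "C \<le> (m^2 - 1) * C" using True C by (simp add: mult_le_cancel_right1)
        then show ?thesis using m2 by (intro mult_left_mono) auto
      qed
      then have h1: "m^2 * C \<le> Q" using key by simp
      have "C \<le> m^2 * C" using m2 C by (simp add: mult_le_cancel_right1)
      then have "C \<le> Q" using h1 by simp
      then show ?thesis using h1 nq K Qpos by (simp add: add_increasing2)
    next
      case False
      have mm: "m^2 * C \<le> 2 * C" using False C by (intro mult_right_mono) auto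
      have "C \<le> Q + 2*K + 2*n*Q/q"
      proof (cases "2 * n * (m^2 - 1) \<le> q")
        case True
        have "n * (m^2 - 1) * C \<le> (q / 2) * C" using True C nq by (intro mult_right_mono) auto
        then have "L \<ge> q * a^2 + q * C / 2" unfolding L_def by (simp add: mult.commute)
        moreover have "q * a^2 \<ge> 0" using nq by simp
        ultimately have "q * C / 2 \<le> q * K" using Lle by simp
        then have "C \<le> 2 * K" using nq by simp
        moreover have "2 * n * Q / q \<ge> 0" using Qpos nq by simp
        ultimately show ?thesis using Qpos by linarith
      next
        case False
        then have "q < (m^2 - 1) * (2 * n)" by (simp add: algebra_simps)
        then have "q / (2 * n) < m^2 - 1" using nq by (simp add: pos_divide_less_eq)
        then have "q / (2 * n) * C \<le> (m^2 - 1) * C" using C by (intro mult_right_mono) auto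
        also have "\<dots> \<le> m^2 * ((m^2 - 1) * C)" using Cm m2 by (simp add: mult_le_cancel_right1)
        also have "\<dots> \<le> Q" by (rule key)
        finally have "C \<le> Q * (2 * n) / q" using nq by (simp add: field_simps)
        then show ?thesis using Qpos K by (simp add: algebra_simps)
      qed
      then show ?thesis using mm Qpos by simp
    qed
    define R where "R = n * Q / q"
    have e: "2 * n * Q / q = 2 * R" "6 * n * Q / q = 6 * R" unfolding R_def by simp_all
    have "a^2 + m^2 * C + C \<le> (480*n)^2 + 4 * Q + 6*K + 6*n*Q/q" using conjunct1[OF CB] conjunct2[OF CB] Ab unfolding e by argo
    moreover have "0 \<le> ((657*n)^2 + (1+6*n)*K) * (1 + q/n) + 2*K" using K nq by simp
    ultimately show ?thesis unfolding Q_def by linarith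
  qed
qed




lemma cS4:
  fixes u :: complex
  assumes eq: "(u - 1) * (2 * u + 1) = of_real S * u^2" and U: "norm u > 4"
  shows "S \<ge> 1"
proof -
  have u0: "u \<noteq> 0" using U by auto
  have "of_real S = 2 - inverse u - inverse u ^ 2"
  proof -
    have "of_real S = (u - 1) * (2 * u + 1) / u^2" using eq u0 by (simp add: field_simps)
    also have "\<dots> = 2 - inverse u - inverse u ^ 2" using u0 by (simp add: field_simps power2_eq_square)
    finally show ?thesis .
  qed
  then have "Re (of_real S) = Re (2 - inverse u - inverse u ^ 2)" by simp
  then have "S = 2 - Re (inverse u) - Re (inverse u ^ 2)" by simp
  moreover have "Re (inverse u) \<le> 1/4"
  proof -
    have "Re (inverse u) \<le> norm (inverse u)" by (rule complex_Re_le_cmod)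
    also have "\<dots> = 1 / norm u" by (simp add: norm_inverse divide_inverse)
    also have "\<dots> \<le> 1/4" using U by (intro divide_left_mono) auto
    finally show ?thesis .
  qed
  moreover have "Re (inverse u ^ 2) \<le> 1/16"
  proof -
    have "Re (inverse u ^ 2) \<le> norm (inverse u ^ 2)" by (rule complex_Re_le_cmod)
    also have "\<dots> = (1 / norm u)^2" by (simp add: norm_inverse divide_inverse norm_power)
    also have "\<dots> \<le> (1/4)^2" using U by (intro power_mono divide_left_mono) auto
    finally show ?thesis by (simp add: power2_eq_square)
  qed
  ultimately show ?thesis by linarith
qed

definition Pf :: "nat \<Rightarrow> complex \<Rightarrow> complex" where
  "Pf n u = 1 - 3 * of_nat (2*n+1) * u^2 + 2 * of_nat (3*n+1) * u^3"

lemma cP4: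
  assumes n: "n > 0" and U: "norm u \<le> 4"
  shows "norm (Pf n u) \<le> 657 * real n"
proof -
  have "norm (Pf n u) \<le> norm (1::complex) + norm (3 * of_nat (2*n+1) * u^2) + norm (2 * of_nat (3*n+1) * u^3)"
    unfolding Pf_def by (rule order_trans[OF norm_triangle_ineq] add_mono norm_triangle_ineq4 order_refl)+
  also have "\<dots> = 1 + 3 * real (2*n+1) * norm u ^ 2 + 2 * real (3*n+1) * norm u ^ 3"
    by (simp only: norm_mult norm_power norm_of_nat norm_numeral norm_one)
  also have "\<dots> \<le> 1 + 3 * real (2*n+1) * 4 ^ 2 + 2 * real (3*n+1) * 4 ^ 3"
    using U by (intro add_mono mult_left_mono power_mono order_refl) auto
  also have "\<dots> \<le> 657 * real n" using n by simp
  finally show ?thesis .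
qed

lemma cPsmall:
  assumes n: "n > 0" and U: "norm u ^ 2 \<le> 1 / (34 * real n)"
  shows "norm (Pf n u) \<ge> 1/2"
proof -
  have nn: "real n \<ge> 1" using n by simp
  have U2: "norm u ^ 2 \<le> 1" using U nn by (smt (verit) divide_le_eq_1_pos)
  then have U1: "norm u \<le> 1" by (simp add: power_le_one_iff)
  have U3: "norm u ^ 3 \<le> norm u ^ 2" using U1 by (simp add: power_decreasing)
  have "norm (1::complex) \<le> norm (Pf n u) + norm (3 * of_nat (2*n+1) * u^2) + norm (2 * of_nat (3*n+1) * u^3)"
  proof -
    have "(1::complex) = Pf n u + 3 * of_nat (2*n+1) * u^2 - 2 * of_nat (3*n+1) * u^3" unfolding Pf_def by simp
    then have "norm (1::complex) = norm (Pf n u + 3 * of_nat (2*n+1) * u^2 - 2 * of_nat (3*n+1) * u^3)" by simp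
    also have "\<dots> \<le> norm (Pf n u + 3 * of_nat (2*n+1) * u^2) + norm (2 * of_nat (3*n+1) * u^3)" by (rule norm_triangle_ineq4)
    also have "\<dots> \<le> norm (Pf n u) + norm (3 * of_nat (2*n+1) * u^2) + norm (2 * of_nat (3*n+1) * u^3)"
      by (simp add: norm_triangle_ineq)
    finally show ?thesis .
  qed
  also have "\<dots> = norm (Pf n u) + 3 * real (2*n+1) * norm u ^ 2 + 2 * real (3*n+1) * norm u ^ 3"
    by (simp only: norm_mult norm_power norm_of_nat norm_numeral norm_one)
  also have "\<dots> \<le> norm (Pf n u) + 3 * real (2*n+1) * norm u ^ 2 + 2 * real (3*n+1) * norm u ^ 2"
    using U3 by (intro add_mono mult_left_mono order_refl) auto
  finally have "1 \<le> norm (Pf n u) + (12 * real n + 5) * norm u ^ 2" by (simp add: algebra_simps)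
  moreover have "(12 * real n + 5) * norm u ^ 2 \<le> (12 * real n + 5) * (1 / (34 * real n))"
    using U by (intro mult_left_mono) auto
  moreover have "(12 * real n + 5) * (1 / (34 * real n)) \<le> 1/2" using nn by (simp add: field_simps)
  ultimately show ?thesis by linarith
qed

lemma cS6:
  fixes u :: complex
  assumes eq: "(u - 1) * (2 * u + 1) = of_real S * u^2" and S: "S \<le> -6 * real n" and n: "n > 0"
  shows "norm u ^ 2 * norm (u - 1) * \<bar>S\<bar> \<ge> 3/80"
proof -
  define W where "W = norm (u - 1)"
  define V where "V = norm (2 * u + 1)"
  have nn: "real n \<ge> 1" using n by simp
  have "norm ((u - 1) * (2 * u + 1)) = norm (of_real S * u^2)" using eq by simp
  then have key: "W * V = \<bar>S\<bar> * norm u ^ 2" unfolding W_def V_def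
    by (simp only: norm_mult norm_power norm_of_real)
  have "norm u ^ 2 * norm (u - 1) * \<bar>S\<bar> = W * (\<bar>S\<bar> * norm u ^ 2)" unfolding W_def by (simp add: algebra_simps)
  then have e: "norm u ^ 2 * norm (u - 1) * \<bar>S\<bar> = W * (W * V)" unfolding key by simp
  have W0: "W \<ge> 0" "V \<ge> 0" unfolding W_def V_def by simp_all
  show ?thesis
  proof (cases "norm u \<le> 1/4")
    case True
    have "W \<ge> 3/4"
    proof -
      have "norm (1::complex) \<le> norm (u - 1) + norm u" using norm_triangle_ineq4[of u "u - 1"] by (simp add: norm_minus_commute)
      then show ?thesis unfolding W_def using True by simp
    qed
    moreover have "V \<ge> 1/2"
    proof -
      have "norm (1::complex) \<le> norm (2*u + 1) + norm (2*u)" using norm_triangle_ineq4[of "2*u+1" "2*u"] by simp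
      then show ?thesis unfolding V_def using True by (simp add: norm_mult)
    qed
    ultimately have "W * (W * V) \<ge> (3/4) * ((3/4) * (1/2))" using W0
      by (intro mult_mono) auto
    then show ?thesis unfolding e by simp
  next
    case False
    have "norm u ^ 2 \<ge> (1/4)^2" using False by (intro power_mono) auto
    moreover have "\<bar>S\<bar> \<ge> 6" using S nn by simp
    ultimately have "\<bar>S\<bar> * norm u ^ 2 \<ge> 6 * (1/4)^2" by (intro mult_mono) auto
    then have WV: "W * V \<ge> 3/8" unfolding key by (simp add: power2_eq_square)
    have V2: "V \<le> 2 * W + 3"
    proof -
      have "2 * u + 1 = 2 * (u - 1) + 3" by simp
      then have "V = norm (2 * (u - 1) + 3)" unfolding V_def by (simp only:)
      also have "\<dots> \<le> norm (2 * (u - 1)) + norm (3::complex)" by (rule norm_triangle_ineq)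
      also have "norm (2 * (u - 1)) = 2 * W" unfolding W_def by (simp only: norm_mult) simp
      finally show ?thesis by simp
    qed
    have W10: "W > 1/10"
    proof (rule ccontr)
      assume "\<not> W > 1/10"
      then have "W \<le> 1/10" by simp
      then have "W * V \<le> (1/10) * (2 * (1/10) + 3)"
        using V2 W0 by (intro mult_mono) auto
      then show False using WV by simp
    qed
    then have "W * (W * V) \<ge> (1/10) * (3/8)" using WV by (intro mult_mono) auto
    then show ?thesis unfolding e by simp
  qed
qed




lemma Pf_factor: "Pf n u = (u - 1) * ((u - 1) * (2 * u + 1) + 6 * of_nat n * u^2)"
  unfolding Pf_def by (simp add: algebra_simps power2_eq_square power3_eq_cube)

lemma Pf_one: "Pf n 1 = 0" unfolding Pf_factor by simp

lemma complex_core: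
  fixes x y z mu u :: complex and n q :: nat
  assumes n: "n > 0" and q: "q > 0" and y0: "y \<noteq> 0"
    and hu: "u = x^n * y^q"
    and h1: "Pf n u = mu * cnj x"
    and h2: "6 * of_nat q * x * (u^3 - u^2) + y * z = mu * (cnj y * y)"
    and h3: "y = mu * cnj z"
  shows "\<exists>a C m U W S Pm. a > 0 \<and> C > 0 \<and> m > 0 \<and> m \<noteq> 1 \<and> U > 0 \<and> W \<ge> 0
    \<and> Pm = m * a \<and> Pm = U^2 * W * \<bar>S + 6*real n\<bar>
    \<and> 6 * real q * a * U^2 * W = m * \<bar>m^2 - 1\<bar> * C
    \<and> 6 * real q * a^2 = (m^2 - 1) * C * (S + 6 * real n)
    \<and> real q * norm (x * (1 - 3 * u^2 + 2 * u^3) + y * z) = m * \<bar>real q * a^2 - real n * (m^2 - 1) * C + real q * C\<bar>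
    \<and> U^2 = (a^2)^n * (m^2 * C)^q
    \<and> W \<le> U + 1
    \<and> (U > 4 \<longrightarrow> S \<ge> 1)
    \<and> (U \<le> 4 \<longrightarrow> Pm \<le> 657 * real n)
    \<and> (U^2 \<le> 1 / (34 * real n) \<longrightarrow> Pm \<ge> 1/2)
    \<and> (S \<le> - 6 * real n \<longrightarrow> U^2 * W * \<bar>S\<bar> \<ge> 3/80)
    \<and> norm x = a \<and> norm z ^ 2 = C \<and> norm y ^ 2 = m^2 * C"
proof -
  define a where "a = norm x"
  define C where "C = norm z ^ 2"
  define m where "m = norm mu"
  define U where "U = norm u"
  define W where "W = norm (u - 1)"
  define Pm where "Pm = norm (Pf n u)"
  have x0: "x \<noteq> 0"
  proof
    assume "x = 0"
    then have "u = 0" using hu n by simp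
    then have "Pf n u = 1" unfolding Pf_def by simp
    then show False using h1 \<open>x = 0\<close> by simp
  qed
  have z0: "z \<noteq> 0" and mu0: "mu \<noteq> 0" using h3 y0 by auto
  have u0: "u \<noteq> 0" using hu x0 y0 by simp
  have apos: "a > 0" unfolding a_def using x0 by simp
  have Cpos: "C > 0" unfolding C_def using z0 by simp
  have mpos: "m > 0" unfolding m_def using mu0 by simp
  have ny: "norm y = m * norm z" using h3 unfolding m_def by (simp add: norm_mult)
  have ny2: "norm y ^ 2 = m^2 * C" unfolding C_def ny by (simp add: power_mult_distrib)
  have cyy: "cnj y * y = of_real (m^2 * C)"
    using complex_norm_square[of y] ny2 by (simp add: mult.commute)
  have yz: "y * z = mu * of_real C"
    unfolding C_def using h3 complex_norm_square[of z] by (simp add: mult.commute mult.left_commute)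
  have xP: "x * Pf n u = mu * of_real (a^2)"
    unfolding a_def using h1 complex_norm_square[of x] by (simp add: mult.commute mult.left_commute)
  have key: "6 * of_nat q * x * (u^2 * (u - 1)) = mu * of_real ((m^2 - 1) * C)"
  proof -
    have "6 * of_nat q * x * (u^3 - u^2) = mu * of_real (m^2 * C) - mu * of_real C"
      using h2 cyy yz by (simp add: algebra_simps)
    then show ?thesis by (simp add: algebra_simps power2_eq_square power3_eq_cube)
  qed
  have u1: "u \<noteq> 1"
  proof
    assume "u = 1"
    then have "Pf n u = 0" by (simp add: Pf_one)
    then show False using h1 mu0 x0 by simp
  qed
  have m1: "m \<noteq> 1"
  proof
    assume "m = 1"
    then have "6 * of_nat q * x * (u^2 * (u - 1)) = 0" using key by simp
    then show False using q x0 u0 u1 by simp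
  qed
  have mC0: "(m^2 - 1) * C \<noteq> 0"
  proof -
    have "m^2 \<noteq> 1" using m1 mpos by (auto simp: power2_eq_1_iff)
    then show ?thesis using Cpos by simp
  qed
  define S where "S = 6 * real q * a^2 / ((m^2 - 1) * C) - 6 * real n"
  have hE5: "6 * real q * a^2 = (m^2 - 1) * C * (S + 6 * real n)"
    unfolding S_def using mC0 by simp
  have eqS: "(u - 1) * (2 * u + 1) = of_real S * u^2"
  proof -
    have "x * Pf n u * of_real ((m^2 - 1) * C) = mu * of_real (a^2) * of_real ((m^2 - 1) * C)"
      using xP by simp
    also have "\<dots> = of_real (a^2) * (6 * of_nat q * x * (u^2 * (u - 1)))" using key by simp
    finally have "x * (Pf n u * of_real ((m^2 - 1) * C)) = x * (of_real (a^2) * (6 * of_nat q * (u^2 * (u - 1))))"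
      by (simp only: mult.assoc mult.left_commute)
    then have "Pf n u * of_real ((m^2 - 1) * C) = of_real (a^2) * (6 * of_nat q * (u^2 * (u - 1)))"
      using mult_left_cancel[OF x0] by blast
    then have "(u - 1) * (((u - 1) * (2 * u + 1) + 6 * of_nat n * u^2) * of_real ((m^2 - 1) * C))
      = (u - 1) * (of_real (6 * real q * a^2) * u^2)"
      unfolding Pf_factor by (simp add: algebra_simps)
    then have "((u - 1) * (2 * u + 1) + 6 * of_nat n * u^2) * of_real ((m^2 - 1) * C)
      = of_real (6 * real q * a^2) * u^2" using u1 by simp
    then have "((u - 1) * (2 * u + 1) + 6 * of_nat n * u^2)
      = of_real (6 * real q * a^2 / ((m^2 - 1) * C)) * u^2"
    proof -
      have gen: "\<And>X Y D u2::complex. D \<noteq> 0 \<Longrightarrow> X * D = Y * u2 \<Longrightarrow> X = Y / D * u2"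
        by (simp add: field_simps)
      have "of_real ((m^2 - 1) * C) \<noteq> (0::complex)" using mC0 of_real_eq_0_iff by blast
      from gen[OF this \<open>_ = of_real (6 * real q * a^2) * u^2\<close>] show ?thesis
        by (simp only: of_real_divide)
    qed
    then show ?thesis unfolding S_def by (simp add: algebra_simps)
  qed
  have PfS: "Pf n u = (u - 1) * u^2 * of_real (S + 6 * real n)"
    unfolding Pf_factor eqS by (simp add: algebra_simps)
  have hPS: "Pm = U^2 * W * \<bar>S + 6*real n\<bar>"
    unfolding Pm_def U_def W_def PfS by (simp only: norm_mult norm_power norm_of_real) (simp add: algebra_simps)
  have hP: "Pm = m * a" unfolding Pm_def m_def a_def h1 by (simp add: norm_mult)
  have hE1: "6 * real q * a * U^2 * W = m * \<bar>m^2 - 1\<bar> * C"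
  proof -
    have "norm (6 * of_nat q * x * (u^2 * (u - 1))) = norm (mu * of_real ((m^2 - 1) * C))" using key by simp
    moreover have "norm (6 * of_nat q * x * (u^2 * (u - 1))) = 6 * real q * a * U^2 * W"
      unfolding a_def U_def W_def by (simp only: norm_mult norm_power norm_of_nat norm_numeral mult.assoc)
    moreover have "norm (mu * of_real ((m^2 - 1) * C)) = m * \<bar>m^2 - 1\<bar> * C"
      using Cpos by (simp only: norm_mult norm_of_real abs_mult) (simp add: m_def)
    ultimately show ?thesis by simp
  qed
  have hF: "real q * norm (x * (1 - 3 * u^2 + 2 * u^3) + y * z) = m * \<bar>real q * a^2 - real n * (m^2 - 1) * C + real q * C\<bar>"
  proof -
    have g: "x * (1 - 3 * u^2 + 2 * u^3) = x * Pf n u - of_nat n * (x * (6 * (u^2 * (u - 1))))"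
      unfolding Pf_def by (simp add: algebra_simps power2_eq_square power3_eq_cube)
    have "of_nat q * (x * (1 - 3 * u^2 + 2 * u^3) + y * z)
       = of_nat q * (x * Pf n u) - of_nat n * (6 * of_nat q * x * (u^2 * (u - 1))) + of_nat q * (y * z)"
      unfolding g by (simp add: algebra_simps)
    also have "\<dots> = mu * of_real (real q * a^2 - real n * (m^2 - 1) * C + real q * C)"
      unfolding xP key yz by (simp add: algebra_simps)
    finally have "norm (of_nat q * (x * (1 - 3 * u^2 + 2 * u^3) + y * z)) = norm (mu * of_real (real q * a^2 - real n * (m^2 - 1) * C + real q * C))"
      by simp
    then show ?thesis by (simp only: norm_mult norm_of_real norm_of_nat m_def)
  qed
  have hU: "U^2 = (a^2)^n * (m^2 * C)^q"
  proof -
    have "U = a^n * norm y ^ q" unfolding U_def a_def hu by (simp add: norm_mult norm_power)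
    then have "U^2 = (a^2)^n * (norm y ^ 2)^q" by (simp add: power_mult_distrib power_mult[symmetric] mult.commute)
    then show ?thesis unfolding ny2 .
  qed
  have hW: "W \<le> U + 1" unfolding W_def U_def using norm_triangle_ineq4[of u 1] by simp
  have Upos: "U > 0" unfolding U_def using u0 by simp
  have W0: "W \<ge> 0" unfolding W_def by simp
  have hS4: "U > 4 \<longrightarrow> S \<ge> 1" using cS4[OF eqS] unfolding U_def by simp
  have hP4: "U \<le> 4 \<longrightarrow> Pm \<le> 657 * real n" using cP4[OF n] unfolding U_def Pm_def by simp
  have hPs: "U^2 \<le> 1 / (34 * real n) \<longrightarrow> Pm \<ge> 1/2" using cPsmall[OF n] unfolding U_def Pm_def by simp
  have hS6: "S \<le> - 6 * real n \<longrightarrow> U^2 * W * \<bar>S\<bar> \<ge> 3/80" using cS6[OF eqS _ n] unfolding U_def W_def by simp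
  show ?thesis
    apply (rule exI[of _ a], rule exI[of _ C], rule exI[of _ m], rule exI[of _ U], rule exI[of _ W], rule exI[of _ S], rule exI[of _ Pm])
    using apos Cpos mpos m1 Upos W0 hP hPS hE1 hE5 hF hU hW hS4 hP4 hPs hS6 ny2
    unfolding a_def C_def by auto
qed




lemma aux_pow: "0 < m \<Longrightarrow> (x::complex)^(m - Suc 0) * x = x^m"
  by (cases m) auto

lemma p1: "cpartial (f_nq n q) 1 v =
   1 - 3 * of_nat (2*n+1) * (v$1)^(2*n) * (v$2)^(2*q) + 2 * of_nat (3*n+1) * (v$1)^(3*n) * (v$2)^(3*q)"
proof -
  have e: "(\<lambda>t. f_nq n q (\<chi> j. if j = 1 then t else v$j)) =
     (\<lambda>t. t - 3 * t ^ (2*n+1) * (v$2) ^ (2*q) + 2 * t ^ (3*n+1) * (v$2) ^ (3*q) + (v$2) * (v$3))"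
    by (auto simp: f_nq_def Let_def)
  have "((\<lambda>t. t - 3 * t ^ (2*n+1) * (v$2) ^ (2*q) + 2 * t ^ (3*n+1) * (v$2) ^ (3*q) + (v$2) * (v$3))
     has_field_derivative (1 - 3 * of_nat (2*n+1) * (v$1)^(2*n) * (v$2)^(2*q) + 2 * of_nat (3*n+1) * (v$1)^(3*n) * (v$2)^(3*q))) (at (v$1))"
  proof (cases "n = 0")
    case True then show ?thesis by (auto intro!: derivative_eq_intros)
  next
    case False
    have a: "v$1 * v$1^(n*3 - Suc 0) = v$1^(n*3)" "v$1 * v$1^(n*2 - Suc 0) = v$1^(n*2)"
      using False by (simp_all add: power_Suc[symmetric] del: power_Suc)
    show ?thesis
      by (rule derivative_eq_intros refl)+ (simp add: algebra_simps a)
  qed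
  then show ?thesis unfolding cpartial_def e by (rule DERIV_imp_deriv)
qed

lemma p2: "cpartial (f_nq n q) 2 v =
   - 3 * (v$1)^(2*n+1) * (of_nat (2*q) * (v$2)^(2*q-1)) + 2 * (v$1)^(3*n+1) * (of_nat (3*q) * (v$2)^(3*q-1)) + v$3"
proof -
  have e: "(\<lambda>t. f_nq n q (\<chi> j. if j = 2 then t else v$j)) =
     (\<lambda>t. v$1 - 3 * (v$1) ^ (2*n+1) * t ^ (2*q) + 2 * (v$1) ^ (3*n+1) * t ^ (3*q) + t * (v$3))"
    by (auto simp: f_nq_def Let_def)
  have "((\<lambda>t. v$1 - 3 * (v$1) ^ (2*n+1) * t ^ (2*q) + 2 * (v$1) ^ (3*n+1) * t ^ (3*q) + t * (v$3))
     has_field_derivative (- 3 * (v$1)^(2*n+1) * (of_nat (2*q) * (v$2)^(2*q-1)) + 2 * (v$1)^(3*n+1) * (of_nat (3*q) * (v$2)^(3*q-1)) + v$3)) (at (v$2))"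
    by (auto intro!: derivative_eq_intros)
  then show ?thesis unfolding cpartial_def e by (rule DERIV_imp_deriv)
qed

lemma p3: "cpartial (f_nq n q) 3 v = v$2"
proof -
  have e: "(\<lambda>t. f_nq n q (\<chi> j. if j = 3 then t else v$j)) =
     (\<lambda>t. v$1 - 3 * (v$1) ^ (2*n+1) * (v$2) ^ (2*q) + 2 * (v$1) ^ (3*n+1) * (v$2) ^ (3*q) + (v$2) * t)"
    by (auto simp: f_nq_def Let_def)
  have "((\<lambda>t. v$1 - 3 * (v$1) ^ (2*n+1) * (v$2) ^ (2*q) + 2 * (v$1) ^ (3*n+1) * (v$2) ^ (3*q) + (v$2) * t)
     has_field_derivative (v$2)) (at (v$3))"
    by (auto intro!: derivative_eq_intros)
  then show ?thesis unfolding cpartial_def e by (rule DERIV_imp_deriv)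
qed



lemma u2: "(x^n * y^q)^2 = (x::complex)^(2*n) * y^(2*q)"
  by (simp add: power_mult_distrib power_mult[symmetric] mult.commute)
lemma u3: "(x^n * y^q)^3 = (x::complex)^(3*n) * y^(3*q)"
  by (simp add: power_mult_distrib power_mult[symmetric] mult.commute)

lemma p1u: "cpartial (f_nq n q) 1 v = Pf n (v$1^n * v$2^q)"
  unfolding p1 Pf_def u2 u3 by (simp add: algebra_simps)

lemma p2u:
  assumes q: "q > 0"
  shows "v$2 * cpartial (f_nq n q) 2 v = 6 * of_nat q * v$1 * ((v$1^n * v$2^q)^3 - (v$1^n * v$2^q)^2) + v$2 * v$3"
proof -
  have a: "v$2 * v$2^(2*q-1) = v$2^(2*q)" "v$2 * v$2^(3*q-1) = v$2^(3*q)"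
    using q by (simp_all add: power_Suc[symmetric] del: power_Suc)
  have b: "v$1^(2*n+1) = v$1 * v$1^(2*n)" "v$1^(3*n+1) = v$1 * v$1^(3*n)" by simp_all
  have "v$2 * cpartial (f_nq n q) 2 v =
     - 6 * of_nat q * v$1^(2*n+1) * (v$2 * v$2^(2*q-1)) + 6 * of_nat q * v$1^(3*n+1) * (v$2 * v$2^(3*q-1)) + v$2 * v$3"
    unfolding p2 by (simp add: algebra_simps)
  also have "\<dots> = 6 * of_nat q * v$1 * ((v$1^n * v$2^q)^3 - (v$1^n * v$2^q)^2) + v$2 * v$3"
    unfolding a b u2 u3 by (simp add: algebra_simps)
  finally show ?thesis .
qed

lemma fu: "f_nq n q v = v$1 * (1 - 3 * (v$1^n * v$2^q)^2 + 2 * (v$1^n * v$2^q)^3) + v$2 * v$3"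
  unfolding f_nq_def Let_def u2 u3 by (simp add: algebra_simps)

lemma norm3: "norm (v :: complex^3) ^ 2 = norm (v$1)^2 + norm (v$2)^2 + norm (v$3)^2"
  unfolding norm_vec_def L2_set_def sum_3 by simp


definition B1 :: "nat \<Rightarrow> nat \<Rightarrow> real \<Rightarrow> real" where
  "B1 n q K = (160*K*real n/3)^2 + 2 * K * (320*K*real n/3 + 34 * real n * ((160*K*real n/3)^2)^n * K^q)"

definition B2 :: "nat \<Rightarrow> nat \<Rightarrow> real \<Rightarrow> real" where
  "B2 n q K = ((657*real n)^2 + (1+6*real n)*K) * (1 + real q/real n) + 2*K
           + (480*real n)^2 + 4 * (480^2*real n*real q) + 6*K + 6*real n*(480^2*real n*real q)/real q"

definition NB :: "nat \<Rightarrow> nat \<Rightarrow> real \<Rightarrow> real" where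
  "NB n q K = K^2 + B1 n q K + B2 n q K"

lemma B_nonneg: "K \<ge> 1 \<Longrightarrow> B1 n q K \<ge> 0 \<and> B2 n q K \<ge> 0"
  unfolding B1_def B2_def by simp

lemma sum3_le: "(A::real) \<le> X \<Longrightarrow> 0 \<le> Y \<Longrightarrow> 0 \<le> Z \<Longrightarrow> A \<le> Z + X + Y"
  by simp

lemma sum3_le2: "(A::real) \<le> Y \<Longrightarrow> 0 \<le> X \<Longrightarrow> 0 \<le> Z \<Longrightarrow> A \<le> Z + X + Y"
  by simp

lemma Mbound:
  assumes n: "n > 0" and q: "q > 0" and K: "K \<ge> 1"
    and vM: "v \<in> Mset (f_nq n q)" and fK: "norm (f_nq n q v) \<le> K"
  shows "norm v ^ 2 \<le> NB n q K"
proof -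
  obtain c where hc: "cgrad (f_nq n q) v = c *s v" using vM unfolding Mset_def by blast
  define x where "x = v$1"
  define y where "y = v$2"
  define z where "z = v$3"
  define mu where "mu = cnj c"
  define u where "u = x^n * y^q"
  have comp: "cnj (cpartial (f_nq n q) i v) = c * v$i" for i
    using arg_cong[OF hc, of "\<lambda>w. w $ i"] unfolding cgrad_def by simp
  have e1: "cpartial (f_nq n q) 1 v = mu * cnj x"
    using arg_cong[OF comp[of 1], of cnj] unfolding mu_def x_def by simp
  have e2: "cpartial (f_nq n q) 2 v = mu * cnj y"
    using arg_cong[OF comp[of 2], of cnj] unfolding mu_def y_def by simp
  have e3: "cpartial (f_nq n q) 3 v = mu * cnj z"
    using arg_cong[OF comp[of 3], of cnj] unfolding mu_def z_def by simp
  have h1: "Pf n u = mu * cnj x" using e1 unfolding p1u u_def x_def y_def .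
  have h2: "6 * of_nat q * x * (u^3 - u^2) + y * z = mu * (cnj y * y)"
  proof -
    have "y * cpartial (f_nq n q) 2 v = y * (mu * cnj y)" using e2 by simp
    then show ?thesis unfolding y_def p2u[OF q] by (simp add: u_def x_def y_def z_def algebra_simps)
  qed
  have h3: "y = mu * cnj z" using e3 unfolding p3 y_def .
  have fv: "f_nq n q v = x * (1 - 3 * u^2 + 2 * u^3) + y * z" unfolding fu u_def x_def y_def z_def ..
  have nv: "norm v ^ 2 = norm x ^ 2 + norm y ^ 2 + norm z ^ 2" unfolding norm3 x_def y_def z_def ..
  have NBpos: "NB n q K \<ge> K^2 + 0 + 0"
    unfolding NB_def using B_nonneg[OF K] by (intro add_mono) auto
  show ?thesis
  proof (cases "y = 0")
    case True
    then have "u = 0" unfolding u_def using q by simp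
    then have "Pf n u = 1" unfolding Pf_def by simp
    then have mu0: "mu \<noteq> 0" using h1 by auto
    then have "z = 0" using h3 True by simp
    then have "norm v ^ 2 = norm (f_nq n q v) ^ 2" unfolding nv fv using True \<open>u = 0\<close> by simp
    also have "\<dots> \<le> K^2" using fK by (intro power_mono) auto
    finally show ?thesis using NBpos by simp
  next
    case False
    obtain a C m U W S Pm where H: "a > 0" "C > 0" "m > 0" "m \<noteq> 1" "U > 0" "W \<ge> 0"
      "Pm = m * a" "Pm = U^2 * W * \<bar>S + 6*real n\<bar>"
      "6 * real q * a * U^2 * W = m * \<bar>m^2 - 1\<bar> * C"
      "6 * real q * a^2 = (m^2 - 1) * C * (S + 6 * real n)"
      "real q * norm (x * (1 - 3 * u^2 + 2 * u^3) + y * z) = m * \<bar>real q * a^2 - real n * (m^2 - 1) * C + real q * C\<bar>"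
      "U^2 = (a^2)^n * (m^2 * C)^q"
      "W \<le> U + 1"
      "U > 4 \<longrightarrow> S \<ge> 1"
      "U \<le> 4 \<longrightarrow> Pm \<le> 657 * real n"
      "U^2 \<le> 1 / (34 * real n) \<longrightarrow> Pm \<ge> 1/2"
      "S \<le> - 6 * real n \<longrightarrow> U^2 * W * \<bar>S\<bar> \<ge> 3/80"
      "norm x = a" "norm z ^ 2 = C" "norm y ^ 2 = m^2 * C"
      using complex_core[OF n q False u_def h1 h2 h3] by blast
    have nv2: "norm v ^ 2 = a^2 + m^2 * C + C" unfolding nv using H by simp
    have FK: "norm (x * (1 - 3 * u^2 + 2 * u^3) + y * z) \<le> K" using fK unfolding fv .
    show ?thesis
    proof (cases "m < 1")
      case True
      have "a^2 + m^2 * C + C \<le> (160*K*n/3)^2 + 2 * K * (320*K*n/3 + 34 * n * ((160*K*n/3)^2)^n * K^q)"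
        apply (rule real_core_m_lt1[where S=S and Pm=Pm and F="norm (x * (1 - 3 * u^2 + 2 * u^3) + y * z)", OF n q K H(1,2,3) True H(5,6,7)])
        using H FK by simp_all
      then have "a^2 + m^2 * C + C \<le> B1 n q K" unfolding B1_def by simp
      then show ?thesis unfolding nv2 NB_def using B_nonneg[OF K] by (intro sum3_le) auto
    next
      case False
      then have m1: "m > 1" using H(4) by simp
      have nn: "real n \<ge> 1" "real q \<ge> 1" using n q by auto
      have "a^2 + m^2 * C + C \<le> ((657*real n)^2 + (1+6*real n)*K) * (1 + real q/real n) + 2*K
           + (480*real n)^2 + 4 * (480^2*real n*real q) + 6*K + 6*real n*(480^2*real n*real q)/real q"
        using real_core_m_gt1[OF nn K H(1,2) m1 H(5,6,7,8,9,10,11,13) _ _ FK] H(14,15) by blast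
      then have "a^2 + m^2 * C + C \<le> B2 n q K" unfolding B2_def by simp
      then show ?thesis unfolding nv2 NB_def using B_nonneg[OF K] by (intro sum3_le2) auto
    qed
  qed
qed

lemma Mtame:
  assumes n: "n > 0" and q: "q > 0"
  shows "M_tame (f_nq n q)"
  unfolding M_tame_def
proof (intro allI impI)
  fix zs :: "nat \<Rightarrow> complex^3"
  assume A: "(\<forall>k. zs k \<in> Mset (f_nq n q)) \<and> filterlim (\<lambda>k. norm (zs k)) at_top sequentially"
  show "filterlim (\<lambda>k. norm (f_nq n q (zs k))) at_top sequentially"
    unfolding filterlim_at_top
  proof
    fix Z :: real
    define K where "K = max 1 Z"
    have K: "K \<ge> 1" unfolding K_def by simp
    have "filterlim (\<lambda>k. norm (zs k)) at_top sequentially" using A by simp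
    then have "\<forall>Z. eventually (\<lambda>k. Z \<le> norm (zs k)) sequentially" by (rule iffD1[OF filterlim_at_top])
    then have "eventually (\<lambda>k. sqrt (NB n q K) + 1 \<le> norm (zs k)) sequentially" by (rule spec)
    then show "eventually (\<lambda>k. Z \<le> norm (f_nq n q (zs k))) sequentially"
    proof (rule eventually_mono)
      fix k assume le: "sqrt (NB n q K) + 1 \<le> norm (zs k)"
      show "Z \<le> norm (f_nq n q (zs k))"
      proof (rule ccontr)
        assume "\<not> Z \<le> norm (f_nq n q (zs k))"
        then have "norm (f_nq n q (zs k)) \<le> K" unfolding K_def by simp
        moreover have "zs k \<in> Mset (f_nq n q)" using A by simp
        ultimately have "norm (zs k) ^ 2 \<le> NB n q K" using Mbound[OF n q K] by simp
        then have "norm (zs k) \<le> sqrt (NB n q K)" by (rule real_le_rsqrt)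
        then show False using le by simp
      qed
    qed
  qed
qed

lemma not_qtame:
  assumes n: "n > 0" and q: "q > 0"
  shows "\<not> quasitame (f_nq n q)"
proof
  assume Q: "quasitame (f_nq n q)"
  define zs :: "nat \<Rightarrow> complex^3" where
    "zs k = vector [of_nat (k+1) ^ q, 1 / of_nat (k+1) ^ n, 0]" for k
  have x: "zs k $ 1 = of_nat (k+1) ^ q" and y: "zs k $ 2 = 1 / of_nat (k+1) ^ n" and z: "zs k $ 3 = 0" for k
    unfolding zs_def by simp_all
  have kz: "(of_nat (k+1)::complex) \<noteq> 0" for k by (metis of_nat_eq_0_iff add_is_0 one_neq_zero)
  have y0: "zs k $ 2 \<noteq> 0" for k
    unfolding y using kz[of k] by simp
  have u1: "(zs k $ 1)^n * (zs k $ 2)^q = 1" for k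
    unfolding x y using kz[of k] by (simp add: power_mult[symmetric] power_divide mult.commute)
  have g1: "cpartial (f_nq n q) 1 (zs k) = 0" for k unfolding p1u u1 Pf_one ..
  have g2: "cpartial (f_nq n q) 2 (zs k) = 0" for k
  proof -
    have "zs k $ 2 * cpartial (f_nq n q) 2 (zs k) = 0" unfolding p2u[OF q] u1 z by simp
    then show ?thesis using y0 by simp
  qed
  have g3: "cpartial (f_nq n q) 3 (zs k) = zs k $ 2" for k by (rule p3)
  have f0: "f_nq n q (zs k) - hprod (zs k) (cgrad (f_nq n q) (zs k)) = 0" for k
  proof -
    have "f_nq n q (zs k) = 0" using fu[of n q "zs k"] u1[of k] z[of k] by simp
    moreover have "hprod (zs k) (cgrad (f_nq n q) (zs k)) = 0"
      unfolding hprod_def sum_3 cgrad_def using g1 g2 g3 z by simp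
    ultimately show ?thesis by simp
  qed
  have nz: "filterlim (\<lambda>k. norm (zs k)) at_top sequentially"
  proof (rule filterlim_at_top_mono[OF filterlim_real_sequentially])
    show "eventually (\<lambda>k. real k \<le> norm (zs k)) sequentially"
    proof (intro always_eventually allI)
      fix k
      have "real k \<le> real (k+1) ^ q"
      proof -
        have "real k \<le> real (k+1)" by simp
        also have "\<dots> \<le> real (k+1) ^ q" using q by (intro self_le_power) auto
        finally show ?thesis .
      qed
      also have "\<dots> = norm (zs k $ 1)" unfolding x by (simp only: norm_power norm_of_nat)
      also have "\<dots> \<le> norm (zs k)" by (rule Finite_Cartesian_Product.norm_nth_le)
      finally show "real k \<le> norm (zs k)" .
    qed
  qed
  have gz: "(\<lambda>k. cgrad (f_nq n q) (zs k)) \<longlonglongrightarrow> 0"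
  proof (rule Lim_null_comparison)
    show "eventually (\<lambda>k. norm (cgrad (f_nq n q) (zs k)) \<le> inverse (real (Suc k))) sequentially"
    proof (intro always_eventually allI)
      fix k
      have "norm (cgrad (f_nq n q) (zs k)) ^ 2 = norm (zs k $ 2) ^ 2"
        unfolding norm3 cgrad_def using g1 g2 g3 by simp
      then have "norm (cgrad (f_nq n q) (zs k)) = norm (zs k $ 2)"
        by (rule power2_eq_imp_eq) simp_all
      also have "\<dots> = inverse (real (Suc k) ^ n)" unfolding y
        by (simp only: norm_divide norm_power norm_of_nat norm_one) (simp add: divide_inverse)
      also have "\<dots> \<le> inverse (real (Suc k))"
        using n by (intro le_imp_inverse_le self_le_power) auto
      finally show "norm (cgrad (f_nq n q) (zs k)) \<le> inverse (real (Suc k))" .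
    qed
    show "(\<lambda>k. inverse (real (Suc k))) \<longlonglongrightarrow> 0" by (rule LIMSEQ_inverse_real_of_nat)
  qed
  have "filterlim (\<lambda>k. norm (f_nq n q (zs k) - hprod (zs k) (cgrad (f_nq n q) (zs k)))) at_top sequentially"
    by (rule Q[unfolded quasitame_def, rule_format, OF conjI[OF nz gz]])
  then have "filterlim (\<lambda>k. 0::real) at_top sequentially" unfolding f0 by simp
  then have "\<forall>Z. eventually (\<lambda>k. Z \<le> (0::real)) sequentially" by (rule iffD1[OF filterlim_at_top])
  then have "eventually (\<lambda>k. (1::real) \<le> 0) sequentially" by (rule spec)
  then show False by simp
qed

theorem proposition1p8:
  fixes n q :: nat
  assumes "n > 0" and "q > 0"
  shows "M_tame (f_nq n q) \<and> \<not> quasitame (f_nq n q)"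
  using Mtame[OF assms] not_qtame[OF assms] by blast

end
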